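(* Let $p$ be prime, $r,k\ge1$, and $\mu\in\mathrm{GL}_r(\mathbb{Z}_p)$ with $\mu^p=I$. For $b\in\{0,\dots,p-1\}$ let $M_b:=\sum_{i=0}^{b-1}\mu^i$. For $x\in(\mathbb{Z}_p^r)^k$ and $w\in\mathbb{Z}_p^r$ let $\eta^x_w:=|\{b\in\{0,\dots,p-1\}^k:\sum_{j=1}^k M_{b_j}x_j=w\}|$. For $(x,w)$ uniformly random, $\mathbb{E}[\eta^x_w]=p^{k-r}$ and $\mathrm{Var}(\eta^x_w)=p^{k-r}(1-p^{-r})$. *)

theory Defs
  imports "HOL-Analysis.Analysis" "Berlekamp_Zassenhaus.Finite_Field"
begin

text \<open>Z_p is rendered as the prime field 'p mod_ring (CARD('p) = p prime);
  Z_p^r as 'p mod_ring ^ 'r with CARD('r) = r; k-tuples as functions on a finite type 'k.\<close>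

definition matpow :: "'a::semiring_1 ^'n^'n \<Rightarrow> nat \<Rightarrow> 'a^'n^'n" where
  "matpow A n = (((**) A) ^^ n) (mat 1)"

definition Mb :: "'a::semiring_1 ^'n^'n \<Rightarrow> nat \<Rightarrow> 'a^'n^'n" where
  "Mb \<mu> b = (\<Sum>i<b. matpow \<mu> i)"

definition eta :: "'p::prime_card mod_ring ^'r^'r \<Rightarrow> ('k::finite \<Rightarrow> 'p mod_ring ^'r)
                    \<Rightarrow> 'p mod_ring ^'r \<Rightarrow> nat" where
  "eta \<mu> x w = card {b :: 'k \<Rightarrow> nat. (\<forall>j. b j < CARD('p)) \<and>
                         (\<Sum>j\<in>UNIV. Mb \<mu> (b j) *v x j) = w}"

end

theory Submission
  imports Defs "HOL-Number_Theory.Number_Theory"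
begin

lemma matpow_0: "matpow A 0 = mat 1" by (simp add: matpow_def)
lemma matpow_Suc: "matpow A (Suc n) = A ** matpow A n" by (simp add: matpow_def)

lemma matpow_add: "matpow (A::'a::comm_ring_1^'n^'n) (m+n) = matpow A m ** matpow A n"
  by (induction m) (simp_all add: matpow_0 matpow_Suc matrix_mul_assoc)

lemma matpow_mult_id:
  assumes "matpow (A::'a::comm_ring_1^'n^'n) p = mat 1"
  shows "matpow A (p*q) = mat 1"
proof (induction q)
  case 0 then show ?case by (simp add: matpow_0)
next
  case (Suc q)
  have "p * Suc q = p + p*q" by simp
  then show ?case using Suc assms by (simp add: matpow_add)
qed

lemma matpow_mod:
  assumes "matpow (A::'a::comm_ring_1^'n^'n) p = mat 1"
  shows "matpow A n = matpow A (n mod p)"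
proof -
  have "n = p * (n div p) + n mod p" by simp
  then have "matpow A n = matpow A (p * (n div p)) ** matpow A (n mod p)"
    by (metis matpow_add)
  then show ?thesis using matpow_mult_id[OF assms] by simp
qed

lemma Mb_Suc: "Mb A (Suc n) = Mb A n + matpow A n" by (simp add: Mb_def)

lemma Mb_add: "Mb (A::'a::comm_ring_1^'n^'n) (b + c) = Mb A b + matpow A b ** Mb A c"
proof (induction c)
  case 0 then show ?case by (simp add: Mb_def)
next
  case (Suc c)
  then show ?case by (simp add: Mb_Suc matpow_add matrix_add_ldistrib add.assoc)
qed

lemma sum_mv: "finite S \<Longrightarrow> (sum M S) *v v = (\<Sum>i\<in>S. M i *v v)"
  by (induction S rule: finite_induct) (simp_all add: matrix_vector_mult_add_rdistrib matrix_vector_mult_0)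

lemma sum_const_vec: "(\<Sum>i<c. (v::'a::comm_ring_1^'n)) = of_nat c *s v"
  by (induction c) (simp_all add: vec_eq_iff sum_component algebra_simps)

lemma K1:
  fixes \<mu> :: "'p::prime_card mod_ring ^'r::finite^'r"
  assumes pw: "matpow \<mu> CARD('p) = mat 1"
    and c: "0 < c" "c < CARD('p)"
    and z: "Mb \<mu> c *v v = 0"
  shows "v = 0"
proof -
  let ?p = "CARD('p)"
  define P where "P n = matpow \<mu> n *v v" for n
  have s: "(\<Sum>i<c. P i) = 0" using z by (simp add: Mb_def sum_mv P_def)
  have "\<mu> *v (\<Sum>i<c. P i) = (\<Sum>i<c. P (Suc i))"
    by (simp add: vec.sum P_def matpow_Suc matrix_vector_mul_assoc)
  then have "(\<Sum>i<c. P (Suc i) - P i) = 0" using s by (simp add: sum_subtractf)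
  then have "P c - P 0 = 0" by (simp add: sum_lessThan_telescope)
  then have Pc: "P c = v" by (simp add: P_def matpow_0)
  have Pca: "P (c * a) = v" for a
  proof (induction a)
    case 0 then show ?case by (simp add: P_def matpow_0)
  next
    case (Suc a)
    have "P (c * Suc a) = matpow \<mu> c *v P (c * a)"
      by (simp add: P_def matpow_add matrix_vector_mul_assoc)
    then show ?case using Suc Pc by (simp add: P_def)
  qed
  have pr: "prime ?p" by (rule prime_card)
  have cop: "coprime c ?p"
    using c pr by (metis coprime_commute nat_dvd_not_less prime_imp_coprime)
  have "\<exists>a. [c * a = 1] (mod ?p)" using cong_solve_coprime_nat[OF cop] by simp
  then obtain a where a: "[c * a = 1] (mod ?p)" by blast
  have p1: "?p > 1" using pr prime_gt_1_nat by blast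
  have "(c * a) mod ?p = 1" using a p1 unfolding cong_def by simp
  then have "matpow \<mu> (c*a) = matpow \<mu> 1" using matpow_mod[OF pw] by metis
  then have mv: "\<mu> *v v = v" using Pca[of a] by (simp add: P_def matpow_Suc matpow_0)
  have Pi: "P i = v" for i
    by (induction i) (simp_all add: P_def matpow_0 matpow_Suc mv flip: matrix_vector_mul_assoc)
  have e1: "(\<Sum>i<c. P i) = of_nat c *s v" unfolding Pi by (rule sum_const_vec)
  have "of_nat c *s v = 0" using s e1 by metis
  moreover have "(of_nat c :: 'p mod_ring) \<noteq> 0"
    using of_nat_0_mod_ring_dvd[where 'a='p] c by (metis nat_dvd_not_less)
  ultimately show ?thesis by (metis vector_mul_eq_0)
qed

lemma K2:
  fixes \<mu> :: "'p::prime_card mod_ring ^'r::finite^'r"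
  assumes pw: "matpow \<mu> CARD('p) = mat 1"
    and b: "b2 < b1" "b1 < CARD('p)"
    and z: "Mb \<mu> b1 *v v = Mb \<mu> b2 *v v"
  shows "v = 0"
proof -
  define c where "c = b1 - b2"
  have b1: "b1 = b2 + c" using b c_def by simp
  define w where "w = Mb \<mu> c *v v"
  have "matpow \<mu> b2 *v w = 0" using z unfolding b1 w_def
    by (simp add: Mb_add matrix_vector_mult_add_rdistrib flip: matrix_vector_mul_assoc)
  then have "matpow \<mu> (CARD('p) - b2) *v (matpow \<mu> b2 *v w) = 0" by simp
  moreover have "CARD('p) - b2 + b2 = CARD('p)" using b by simp
  ultimately have "w = 0" using pw
    by (metis matpow_add matrix_vector_mul_assoc matrix_vector_mul_lid)
  then show ?thesis using K1[OF pw, of c v] b c_def w_def by simp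
qed

lemma card_filter_sum: "finite A \<Longrightarrow> real (card {x\<in>A. P x}) = (\<Sum>x\<in>A. if P x then 1 else 0)"
  by (simp add: sum.If_cases Int_def)

lemma count_fiber:
  fixes D :: "'k::finite \<Rightarrow> 'a::{comm_ring_1,finite}^'n::finite^'n"
  assumes inj: "inj ((*v) (D j0))"
  shows "real (card {x::'k \<Rightarrow> 'a^'n. (\<Sum>j\<in>UNIV. D j *v x j) = 0}) * real CARD('a^'n)
         = real CARD('k \<Rightarrow> 'a^'n)"
proof -
  define g where "g x = (\<Sum>j\<in>UNIV. D j *v x j)" for x :: "'k \<Rightarrow> 'a^'n"
  define t where "t u x = (\<lambda>j. x j + (if j = j0 then u else 0))" for u and x :: "'k \<Rightarrow> 'a^'n"
  have gt: "g (t u x) = g x + D j0 *v u" for u x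
  proof -
    have "g (t u x) = (\<Sum>j\<in>UNIV. D j *v x j + (if j = j0 then D j *v u else 0))"
      unfolding g_def t_def by (intro sum.cong) (auto simp: matrix_vector_right_distrib)
    also have "\<dots> = g x + D j0 *v u" by (simp add: sum.distrib g_def)
    finally show ?thesis .
  qed
  have tt: "t (-u) (t u x) = x" for u x by (simp add: t_def fun_eq_iff)
  have surj: "surj ((*v) (D j0))" using finite_UNIV_inj_surj[OF finite_class.finite_UNIV inj] .
  have fib: "card {x. g x = c} = card {x. g x = 0}" for c
  proof -
    obtain u where u: "D j0 *v u = c" using surj by (metis surjD)
    have "{x. g x = c} = t u ` {x. g x = 0}"
    proof (rule Set.set_eqI)
      fix y show "y \<in> {x. g x = c} \<longleftrightarrow> y \<in> t u ` {x. g x = 0}"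
      proof
      assume "y \<in> {x. g x = c}"
      moreover have "D j0 *v (-u) = - c"
        using u by (metis add.left_inverse matrix_vector_right_distrib matrix_vector_mult_0_right eq_neg_iff_add_eq_0)
      ultimately have "g (t (-u) y) = 0" using gt by simp
      moreover have "y = t u (t (-u) y)" using tt[of "-u" y] by simp
      ultimately show "y \<in> t u ` {x. g x = 0}" by blast
    next
      assume "y \<in> t u ` {x. g x = 0}"
      then show "y \<in> {x. g x = c}" using gt u by auto
    qed
    qed
    moreover have "inj (t u)" by (metis injI tt)
    ultimately show ?thesis by (simp add: card_image inj_on_subset)
  qed
  have "real CARD('k \<Rightarrow> 'a^'n) = (\<Sum>x\<in>UNIV. \<Sum>c\<in>UNIV. if g x = c then 1 else 0)"
    by simp
  also have "\<dots> = (\<Sum>c\<in>UNIV. \<Sum>x\<in>UNIV. if g x = c then 1 else 0)" by (rule sum.swap)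
  also have "\<dots> = (\<Sum>c\<in>(UNIV::('a^'n) set). real (card {x. g x = 0}))"
  proof (rule sum.cong)
    fix c show "(\<Sum>x\<in>UNIV. if g x = c then 1 else 0) = real (card {x. g x = 0})"
      using card_filter_sum[of UNIV "\<lambda>x. g x = c"] fib[of c] by simp
  qed simp
  finally show ?thesis by (simp add: g_def)
qed

theorem mainTheorem11:
  fixes \<mu> :: "'p::prime_card mod_ring ^'r::finite^'r"
  assumes "invertible \<mu>"
    and "matpow \<mu> CARD('p) = mat 1"
  defines "N \<equiv> real (CARD('k::finite \<Rightarrow> 'p mod_ring ^'r) * CARD('p mod_ring ^'r))"
  defines "E \<equiv> (\<Sum>x\<in>(UNIV :: ('k \<Rightarrow> 'p mod_ring ^'r) set). \<Sum>w\<in>UNIV. real (eta \<mu> x w)) / N"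
  shows "E = real CARD('p) powr (real CARD('k) - real CARD('r)) \<and>
         (\<Sum>x\<in>(UNIV :: ('k \<Rightarrow> 'p mod_ring ^'r) set). \<Sum>w\<in>UNIV. (real (eta \<mu> x w) - E)^2) / N
         = real CARD('p) powr (real CARD('k) - real CARD('r)) * (1 - real CARD('p) powr (- real CARD('r)))"
proof -
  note pw = assms(2)
  let ?p = "CARD('p)"
  define B where "B = {b::'k \<Rightarrow> nat. \<forall>j. b j < ?p}"
  have BPi: "B = Pi\<^sub>E UNIV (\<lambda>_. {..<?p})" by (auto simp: B_def PiE_UNIV_domain)
  have finB: "finite B" unfolding BPi by (simp add: finite_PiE)
  have cardB: "card B = ?p ^ CARD('k)" unfolding BPi by (simp add: card_PiE)
  define f where "f x b = (\<Sum>j\<in>UNIV. Mb \<mu> (b j) *v x j)"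
    for x :: "'k \<Rightarrow> 'p mod_ring ^'r" and b :: "'k \<Rightarrow> nat"
  define I where "I x b w = (if f x b = w then 1 else 0::real)" for x b w
  have eta_eq: "real (eta \<mu> x w) = (\<Sum>b\<in>B. I x b w)" for x :: "'k \<Rightarrow> 'p mod_ring ^'r" and w
  proof -
    have "{b. (\<forall>j. b j < ?p) \<and> (\<Sum>j\<in>UNIV. Mb \<mu> (b j) *v x j) = w} = {b\<in>B. f x b = w}"
      by (simp add: B_def f_def)
    then show ?thesis unfolding eta_def I_def using card_filter_sum[OF finB] by simp
  qed
  have S1: "(\<Sum>w\<in>UNIV. real (eta \<mu> x w)) = real (card B)" for x :: "'k \<Rightarrow> 'p mod_ring ^'r"
  proof -
    have "(\<Sum>w\<in>UNIV. real (eta \<mu> x w)) = (\<Sum>b\<in>B. \<Sum>w\<in>UNIV. I x b w)"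
      unfolding eta_eq by (rule sum.swap)
    also have "\<dots> = (\<Sum>b\<in>B. 1)" by (simp add: I_def)
    finally show ?thesis by simp
  qed
  have S2: "(\<Sum>w\<in>UNIV. real (eta \<mu> x w)^2) = (\<Sum>b\<in>B. \<Sum>b'\<in>B. if f x b = f x b' then 1 else 0)" for x :: "'k \<Rightarrow> 'p mod_ring ^'r"
  proof -
    have "(\<Sum>w\<in>UNIV. real (eta \<mu> x w)^2) = (\<Sum>w\<in>UNIV. \<Sum>b\<in>B. \<Sum>b'\<in>B. I x b w * I x b' w)"
      unfolding eta_eq by (simp add: power2_eq_square sum_product)
    also have "\<dots> = (\<Sum>b\<in>B. \<Sum>w\<in>UNIV. \<Sum>b'\<in>B. I x b w * I x b' w)" by (rule sum.swap)
    also have "\<dots> = (\<Sum>b\<in>B. \<Sum>b'\<in>B. \<Sum>w\<in>UNIV. I x b w * I x b' w)"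
      by (rule sum.cong[OF refl], rule sum.swap)
    also have "\<dots> = (\<Sum>b\<in>B. \<Sum>b'\<in>B. if f x b = f x b' then 1 else 0)"
      by (intro sum.cong refl) (simp add: I_def if_distrib[of "\<lambda>z. z * _"] cong: if_cong)
    finally show ?thesis .
  qed
  define X where "X = real CARD('k \<Rightarrow> 'p mod_ring ^'r)"
  define V where "V = real CARD('p mod_ring ^'r)"
  define n where "n = real (card B)"
  have V0: "V > 0" and X0: "X > 0" by (simp_all add: V_def X_def)
  have S3: "(\<Sum>x\<in>UNIV. if f x b = f x b' then 1 else 0) = (if b = b' then X else X / V)"
    if bB: "b \<in> B" "b' \<in> B" for b b'
  proof (cases "b = b'")
    case True then show ?thesis by (simp add: X_def)
  next
    case False
    then obtain j0 where j0: "b j0 \<noteq> b' j0" by auto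
    define D where "D j = Mb \<mu> (b j) - Mb \<mu> (b' j)" for j
    have "inj ((*v) (D j0))"
    proof (rule injI)
      fix u1 u2 assume "D j0 *v u1 = D j0 *v u2"
      then have e: "Mb \<mu> (b j0) *v (u1 - u2) = Mb \<mu> (b' j0) *v (u1 - u2)"
        by (simp add: D_def matrix_vector_mult_diff_rdistrib matrix_vector_right_distrib vec.diff algebra_simps)
      have lt: "b j0 < ?p" "b' j0 < ?p" using bB by (auto simp: B_def)
      show "u1 = u2"
      proof (cases "b' j0 < b j0")
        case True then show ?thesis using K2[OF pw True lt(1) e] by simp
      next
        case False
        then have "b j0 < b' j0" using j0 by simp
        then show ?thesis using K2[OF pw _ lt(2) e[symmetric]] by simp
      qed
    qed
    from count_fiber[of D j0, OF this]
    have cf: "real (card {x. (\<Sum>j\<in>UNIV. D j *v x j) = 0}) * V = X" by (simp add: X_def V_def)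
    have "{x. f x b = f x b'} = {x. (\<Sum>j\<in>UNIV. D j *v x j) = 0}"
      by (simp add: f_def D_def matrix_vector_mult_diff_rdistrib sum_subtractf)
    moreover have "V > 0" by (simp add: V_def)
    ultimately have "real (card {x. f x b = f x b'}) = X / V" using cf by (simp add: field_simps)
    then show ?thesis using False card_filter_sum[of UNIV "\<lambda>x. f x b = f x b'"] by simp
  qed
  have sumE: "(\<Sum>x\<in>(UNIV :: ('k \<Rightarrow> 'p mod_ring ^'r) set). \<Sum>w\<in>UNIV. real (eta \<mu> x w)) = X * n"
    by (simp add: S1 X_def n_def)
  have NXV: "N = X * V" by (simp add: N_def X_def V_def)
  have Eeq: "E = n / V" using V0 X0 by (simp add: E_def sumE NXV)
  have sum2: "(\<Sum>x\<in>(UNIV :: ('k \<Rightarrow> 'p mod_ring ^'r) set). \<Sum>w\<in>UNIV. real (eta \<mu> x w)^2)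
      = X * (n + (n * n - n) / V)"
  proof -
    have "(\<Sum>x\<in>(UNIV :: ('k \<Rightarrow> 'p mod_ring ^'r) set). \<Sum>w\<in>UNIV. real (eta \<mu> x w)^2)
      = (\<Sum>x\<in>UNIV. \<Sum>b\<in>B. \<Sum>b'\<in>B. if f x b = f x b' then 1 else 0)" by (simp add: S2)
    also have "\<dots> = (\<Sum>b\<in>B. \<Sum>x\<in>UNIV. \<Sum>b'\<in>B. if f x b = f x b' then 1 else 0)" by (rule sum.swap)
    also have "\<dots> = (\<Sum>b\<in>B. \<Sum>b'\<in>B. \<Sum>x\<in>UNIV. if f x b = f x b' then 1 else 0)"
      by (rule sum.cong[OF refl], rule sum.swap)
    also have "\<dots> = (\<Sum>b\<in>B. \<Sum>b'\<in>B. X / V + (if b = b' then X - X / V else 0))"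
      by (intro sum.cong refl) (simp add: S3)
    also have "\<dots> = (\<Sum>b\<in>B. n * (X / V) + (X - X / V))"
      using finB by (simp add: sum.distrib n_def)
    also have "\<dots> = X * (n + (n * n - n) / V)"
      using V0 by (simp add: n_def[symmetric] field_simps add_divide_distrib[symmetric] diff_divide_distrib[symmetric])
    finally show ?thesis .
  qed
  have var: "(\<Sum>x\<in>(UNIV :: ('k \<Rightarrow> 'p mod_ring ^'r) set). \<Sum>w\<in>UNIV. (real (eta \<mu> x w) - E)^2)
     = (\<Sum>x\<in>(UNIV :: ('k \<Rightarrow> 'p mod_ring ^'r) set). \<Sum>w\<in>UNIV. real (eta \<mu> x w)^2)
       - 2 * E * (\<Sum>x\<in>(UNIV :: ('k \<Rightarrow> 'p mod_ring ^'r) set). \<Sum>w\<in>UNIV. real (eta \<mu> x w))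
       + X * V * E^2"
    by (simp add: power2_diff sum.distrib sum_subtractf sum_distrib_left X_def V_def algebra_simps)
  have P0: "real ?p > 0" by simp
  have Vp: "V = real ?p ^ CARD('r)" by (simp add: V_def CARD_vec CARD_mod_ring)
  have np: "n = real ?p ^ CARD('k)" by (simp add: n_def cardB)
  have pw1: "real ?p powr (real CARD('k) - real CARD('r)) = n / V"
    using P0 by (simp add: powr_diff powr_realpow Vp np)
  have pw2: "real ?p powr (- real CARD('r)) = 1 / V"
    using P0 by (simp add: powr_minus powr_realpow Vp divide_inverse)
  show ?thesis
  proof
    show "E = real ?p powr (real CARD('k) - real CARD('r))" using Eeq pw1 by simp
  next
    show "(\<Sum>x\<in>(UNIV :: ('k \<Rightarrow> 'p mod_ring ^'r) set). \<Sum>w\<in>UNIV. (real (eta \<mu> x w) - E)^2) / N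
         = real ?p powr (real CARD('k) - real CARD('r)) * (1 - real ?p powr (- real CARD('r)))"
      unfolding var unfolding sum2 sumE pw1 pw2 Eeq NXV using V0 X0
      by (simp add: field_simps power2_eq_square)
  qed
qed

end
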